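(* Let $m\le d$ and $B>0$, let $Y$ be a $d\times m$ random matrix whose entries $Y_{ij}$ are independent sub-Gaussian random variables with moment $B$, and let $\Sigma$ be a diagonal $d\times d$ PSD matrix with $\Sigma\preceq I$. Then for all $t\ge0$ and $\epsilon\in(0,1)$, \[ \mathbb{P}[\|\sqrt{\Sigma}Y\|\ge t]\le\mathcal{N}_m(\epsilon)\exp\Big(\frac{\mathrm{tr}(\Sigma)}{2}-\frac{t^2(1-\epsilon)^2}{4B^2}\Big). \]
   Context: A real random variable $Z$ is sub-Gaussian with moment $B$ if $\mathbb{E}[\exp(sZ)]\le\exp(s^2B^2/2)$ for all $s\in\mathbb{R}$. $\|\cdot\|$ on matrices is the Euclidean operator norm. $S^{m-1}=\{x\in\mathbb{R}^m:\|x\|=1\}$; an $\epsilon$-net of $S^{m-1}$ is a set $C\subseteq S^{m-1}$ such that every $x\in S^{m-1}$ has $x'\in C$ with $\|x-x'\|\le\epsilon$; $\mathcal{N}_m(\epsilon)$ is the minimal size of such a net. *)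

theory Defs
  imports "HOL-Analysis.Analysis" "HOL-Probability.Probability"
begin

definition subgaussian :: "'w measure \<Rightarrow> ('w \<Rightarrow> real) \<Rightarrow> real \<Rightarrow> bool" where
  "subgaussian M Z B \<longleftrightarrow>
     (\<forall>s::real. integrable M (\<lambda>w. exp (s * Z w)) \<and>
        (\<integral>w. exp (s * Z w) \<partial>M) \<le> exp (s\<^sup>2 * B\<^sup>2 / 2))"

definition diagonal_mat :: "real^'n^'n \<Rightarrow> bool" where
  "diagonal_mat A \<longleftrightarrow> (\<forall>i j. i \<noteq> j \<longrightarrow> A $ i $ j = 0)"

definition psd_mat :: "real^'n^'n \<Rightarrow> bool" where
  "psd_mat A \<longleftrightarrow> transpose A = A \<and> (\<forall>x. 0 \<le> x \<bullet> (A *v x))"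

definition diag_sqrt :: "real^'n^'n \<Rightarrow> real^'n^'n" where
  "diag_sqrt A = (\<chi> i j. if i = j then sqrt (A $ i $ i) else 0)"

definition op_norm :: "real^'m^'n \<Rightarrow> real" where
  "op_norm A = onorm (\<lambda>x. A *v x)"

definition is_eps_net :: "'a::metric_space set \<Rightarrow> real \<Rightarrow> 'a set \<Rightarrow> bool" where
  "is_eps_net S \<epsilon> C \<longleftrightarrow> C \<subseteq> S \<and> (\<forall>x\<in>S. \<exists>x'\<in>C. dist x x' \<le> \<epsilon>)"

definition net_number :: "'a::metric_space set \<Rightarrow> real \<Rightarrow> nat" where
  "net_number S \<epsilon> = (LEAST n. \<exists>C. finite C \<and> card C = n \<and> is_eps_net S \<epsilon> C)"

end

theory Submission
  imports Defs
begin


definition "NG = density lborel (\<lambda>x. ennreal (std_normal_density x))"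

lemma prob_NG: "prob_space NG"
  unfolding NG_def by (rule prob_space_normal_density) simp

lemma sets_NG[simp, measurable_cong]: "sets NG = sets borel"
  unfolding NG_def by simp

lemma nn_normal_density: "0 < \<sigma> \<Longrightarrow> (\<integral>\<^sup>+x. ennreal (normal_density \<mu> \<sigma> x) \<partial>lborel) = 1"
  by (subst nn_integral_eq_integral) (auto simp: integral_normal_density integrable_normal_density)

lemma gauss_mgf: "(\<integral>\<^sup>+x. ennreal (exp (a * x)) \<partial>NG) = ennreal (exp (a\<^sup>2 / 2))"
proof -
  have eq: "std_normal_density x * exp (a * x) = exp (a\<^sup>2/2) * normal_density a 1 x" for x
  proof -
    have "- x\<^sup>2 / 2 + a * x = a\<^sup>2/2 + (- (x - a)\<^sup>2 / 2)" by (simp add: power2_eq_square field_simps)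
    then have "exp (- x\<^sup>2 / 2) * exp (a * x) = exp (a\<^sup>2/2) * exp (- (x - a)\<^sup>2 / 2)"
      by (metis exp_add)
    then show ?thesis unfolding std_normal_density_def normal_density_def by simp
  qed
  have "(\<integral>\<^sup>+x. ennreal (exp (a * x)) \<partial>NG) = (\<integral>\<^sup>+x. ennreal (std_normal_density x) * ennreal (exp (a * x)) \<partial>lborel)"
    unfolding NG_def by (subst nn_integral_density) auto
  also have "\<dots> = (\<integral>\<^sup>+x. ennreal (exp (a\<^sup>2/2)) * ennreal (normal_density a 1 x) \<partial>lborel)"
    by (intro nn_integral_cong) (simp add: eq ennreal_mult'[symmetric])
  also have "\<dots> = ennreal (exp (a\<^sup>2/2))"
    by (subst nn_integral_cmult) (auto simp: nn_normal_density)
  finally show ?thesis .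
qed

lemma gauss_sq:
  assumes "0 \<le> c" "c < 1/2"
  shows "(\<integral>\<^sup>+x. ennreal (exp (c * x\<^sup>2)) \<partial>NG) = ennreal (1 / sqrt (1 - 2 * c))"
proof -
  define s where "s = 1 / sqrt (1 - 2 * c)"
  have pos: "0 < 1 - 2 * c" using assms by simp
  have s2: "s\<^sup>2 = 1 / (1 - 2*c)" unfolding s_def using pos by (simp add: power_divide)
  have spos: "s > 0" unfolding s_def using pos by simp
  have eq: "std_normal_density x * exp (c * x\<^sup>2) = s * normal_density 0 s x" for x
  proof -
    have e1: "- x\<^sup>2 / 2 + c * x\<^sup>2 = - (x - 0)\<^sup>2 / (2 * s\<^sup>2)"
      using pos by (simp add: s2 field_simps)
    have e2: "sqrt (2 * pi * s\<^sup>2) = sqrt (2 * pi) * s"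
      using spos by (simp add: real_sqrt_mult)
    have "exp (- x\<^sup>2 / 2) * exp (c * x\<^sup>2) = exp (- (x - 0)\<^sup>2 / (2 * s\<^sup>2))"
      by (metis e1 exp_add)
    then show ?thesis unfolding std_normal_density_def normal_density_def e2
      using spos by (simp add: field_simps)
  qed
  have "(\<integral>\<^sup>+x. ennreal (exp (c * x\<^sup>2)) \<partial>NG) = (\<integral>\<^sup>+x. ennreal (std_normal_density x) * ennreal (exp (c * x\<^sup>2)) \<partial>lborel)"
    unfolding NG_def by (subst nn_integral_density) auto
  also have "\<dots> = (\<integral>\<^sup>+x. ennreal s * ennreal (normal_density 0 s x) \<partial>lborel)"
    using spos by (intro nn_integral_cong) (simp add: eq ennreal_mult'[symmetric])
  also have "\<dots> = ennreal s"
    by (subst nn_integral_cmult) (auto simp: nn_normal_density spos)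
  finally show ?thesis unfolding s_def .
qed

lemma sqrt_exp_bound:
  assumes "0 \<le> \<sigma>" "\<sigma> \<le> 1"
  shows "1 / sqrt (1 - 2 * (\<sigma>/4)) \<le> exp (\<sigma>/2)"
proof -
  define u where "u = \<sigma>/2"
  have u: "0 \<le> u" "u \<le> 1/2" using assms unfolding u_def by auto
  have "1 + u \<le> exp u" by (rule exp_ge_add_one_self)
  then have "(1 + u)\<^sup>2 \<le> (exp u)\<^sup>2" using u by (intro power_mono) auto
  then have a: "(1+u)\<^sup>2 \<le> exp (2*u)" by (metis exp_add mult_2 power2_eq_square)
  have b: "1 \<le> (1+u)\<^sup>2 * (1 - u)"
  proof -
    have "(1+u)\<^sup>2 * (1 - u) = 1 + u * (1 - u - u\<^sup>2)" by (simp add: power2_eq_square algebra_simps)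
    moreover have "u\<^sup>2 \<le> 1/4" using u mult_mono[of u "1/2" u "1/2"] by (simp add: power2_eq_square)
    moreover have "0 \<le> 1 - u - u\<^sup>2" using calculation(2) u by simp
    ultimately show ?thesis using u by simp
  qed
  have c: "1 \<le> exp (2*u) * (1 - u)" using b mult_right_mono[OF a, of "1-u"] u by linarith
  have d: "1 - 2 * (\<sigma>/4) = 1 - u" unfolding u_def by simp
  have e: "exp (\<sigma>/2) = exp u" unfolding u_def ..
  have "1 \<le> sqrt (exp (2*u) * (1 - u))" using c by simp
  also have "sqrt (exp (2*u) * (1 - u)) = exp u * sqrt (1 - u)"
  proof -
    have "exp (2*u) = (exp u)\<^sup>2" by (metis exp_add mult_2 power2_eq_square)
    then show ?thesis by (simp add: real_sqrt_mult)
  qed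
  finally have "1 \<le> exp u * sqrt (1 - u)" .
  moreover have "sqrt (1 - u) > 0" using u by simp
  ultimately show ?thesis unfolding d e by (simp add: divide_le_eq mult.commute)
qed



lemma core:
  fixes M :: "'w measure" and Y :: "'d::finite \<Rightarrow> 'm::finite \<Rightarrow> 'w \<Rightarrow> real"
    and \<sigma> :: "'d \<Rightarrow> real" and x :: "'m \<Rightarrow> real" and B :: real
  assumes P: "prob_space M" and Bpos: "B > 0"
    and meas[measurable]: "\<And>i j. Y i j \<in> borel_measurable M"
    and ind: "prob_space.indep_vars M (\<lambda>_. borel) (\<lambda>(i, j). Y i j) UNIV"
    and sg: "\<And>i j s. integrable M (\<lambda>w. exp (s * Y i j w)) \<and>
        (\<integral>w. exp (s * Y i j w) \<partial>M) \<le> exp (s\<^sup>2 * B\<^sup>2 / 2)"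
    and sig: "\<And>i. 0 \<le> \<sigma> i" "\<And>i. \<sigma> i \<le> 1"
    and xn: "(\<Sum>j\<in>UNIV. (x j)\<^sup>2) = 1"
  shows "(\<integral>\<^sup>+w. ennreal (exp ((\<Sum>i\<in>UNIV. (sqrt (\<sigma> i) * (\<Sum>j\<in>UNIV. Y i j w * x j))\<^sup>2) / (4*B\<^sup>2))) \<partial>M)
         \<le> ennreal (exp ((\<Sum>i\<in>UNIV. \<sigma> i) / 2))"
proof -
  interpret M: prob_space M by (rule P)
  interpret NGp: prob_space NG by (rule prob_NG)
  interpret PS: product_sigma_finite "\<lambda>_::'d. NG"
    by (simp add: product_sigma_finite_def NGp.sigma_finite_measure_axioms)
  define G where "G = PiM (UNIV::'d set) (\<lambda>_. NG)"
  have PG: "prob_space G" unfolding G_def by (rule prob_space_PiM) (rule prob_NG)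
  interpret Gp: prob_space G by (rule PG)
  interpret pair_sigma_finite M G
    by (simp add: pair_sigma_finite_def M.sigma_finite_measure_axioms Gp.sigma_finite_measure_axioms)
  have sig2: "\<sigma> i \<le> 2" for i using sig(2)[of i] by simp
  define c where "c = 1 / (sqrt 2 * B)"
  define W where "W i w = sqrt (\<sigma> i) * (\<Sum>j\<in>UNIV. Y i j w * x j)" for i w
  have Wm[measurable]: "W i \<in> borel_measurable M" for i unfolding W_def by measurable
  have c2: "c\<^sup>2 / 2 = 1 / (4 * B\<^sup>2)" unfolding c_def using Bpos by (simp add: power2_eq_square field_simps)
  have c2B: "c\<^sup>2 * B\<^sup>2 / 2 = 1/4" unfolding c_def using Bpos by (simp add: power2_eq_square field_simps)
  have s1: "ennreal (exp ((\<Sum>i\<in>UNIV. (W i w)\<^sup>2) / (4*B\<^sup>2))) =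
      (\<integral>\<^sup>+g. (\<Prod>i\<in>UNIV. ennreal (exp (c * W i w * g i))) \<partial>G)" for w
  proof -
    have "(\<integral>\<^sup>+g. (\<Prod>i\<in>UNIV. ennreal (exp (c * W i w * g i))) \<partial>G)
        = (\<Prod>i\<in>UNIV. \<integral>\<^sup>+y. ennreal (exp (c * W i w * y)) \<partial>NG)"
      unfolding G_def by (rule PS.product_nn_integral_prod) auto
    also have "\<dots> = (\<Prod>i\<in>UNIV. ennreal (exp ((c * W i w)\<^sup>2 / 2)))"
      by (simp add: gauss_mgf)
    also have "\<dots> = ennreal (\<Prod>i\<in>UNIV. exp ((c * W i w)\<^sup>2 / 2))"
      by (simp add: prod_ennreal)
    also have "(\<Prod>i\<in>UNIV. exp ((c * W i w)\<^sup>2 / 2)) = exp (\<Sum>i\<in>UNIV. (c * W i w)\<^sup>2 / 2)"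
      by (simp add: exp_sum)
    also have "(\<Sum>i\<in>UNIV. (c * W i w)\<^sup>2 / 2) = (\<Sum>i\<in>UNIV. (W i w)\<^sup>2) / (4*B\<^sup>2)"
    proof -
      have "(\<Sum>i\<in>UNIV. (c * W i w)\<^sup>2 / 2) = c\<^sup>2 * ((\<Sum>i\<in>UNIV. (W i w)\<^sup>2) / 2)"
        by (simp add: power_mult_distrib sum_divide_distrib sum_distrib_left)
      also have "\<dots> = (\<Sum>i\<in>UNIV. (W i w)\<^sup>2) * (c\<^sup>2 / 2)" by simp
      also have "\<dots> = (\<Sum>i\<in>UNIV. (W i w)\<^sup>2) / (4*B\<^sup>2)" by (simp add: c2)
      finally show ?thesis .
    qed
    finally show ?thesis ..
  qed
  have s2meas: "(\<lambda>(w, g). \<Prod>i\<in>UNIV. ennreal (exp (c * W i w * g i))) \<in> borel_measurable (M \<Otimes>\<^sub>M G)"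
    unfolding G_def by measurable
  have s3: "(\<integral>\<^sup>+w. (\<Prod>i\<in>UNIV. ennreal (exp (c * W i w * g i))) \<partial>M)
      \<le> ennreal (\<Prod>i\<in>UNIV. exp (\<sigma> i / 4 * (g i)\<^sup>2))" for g
  proof -
    define a where "a = (\<lambda>(i::'d,j::'m). c * g i * sqrt (\<sigma> i) * x j)"
    define X where "X = (\<lambda>k w. exp (a k * (case k of (i, j) \<Rightarrow> Y i j w)))"
    have pe: "(\<Prod>i\<in>UNIV. exp (c * W i w * g i)) = (\<Prod>k\<in>UNIV. X k w)" for w
    proof -
      have "(\<Prod>i\<in>UNIV. exp (c * W i w * g i)) = (\<Prod>i\<in>UNIV. \<Prod>j\<in>UNIV. X (i, j) w)"
      proof (intro prod.cong refl)
        fix i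
        have "c * W i w * g i = (\<Sum>j\<in>UNIV. a (i, j) * Y i j w)"
          unfolding W_def a_def by (simp add: sum_distrib_left mult_ac)
        then show "exp (c * W i w * g i) = (\<Prod>j\<in>UNIV. X (i, j) w)"
          unfolding X_def by (simp add: exp_sum)
      qed
      also have "\<dots> = (\<Prod>k\<in>UNIV \<times> UNIV. X k w)"
        by (subst prod.cartesian_product) simp
      finally show ?thesis by (simp add: UNIV_Times_UNIV)
    qed
    have indX: "M.indep_vars (\<lambda>_. borel) X UNIV"
    proof -
      have "M.indep_vars (\<lambda>_. borel) (\<lambda>k w. (\<lambda>y. exp (a k * y)) ((\<lambda>(i, j). Y i j) k w)) UNIV"
        by (rule M.indep_vars_compose2[OF ind]) simp
      then show ?thesis unfolding X_def by (simp add: case_prod_beta')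
    qed
    have indX': "M.indep_vars (\<lambda>_. borel) (\<lambda>k w. ennreal (X k w)) UNIV"
      by (rule M.indep_vars_compose2[OF indX]) simp
    have Xi: "(\<integral>\<^sup>+w. ennreal (X k w) \<partial>M) = ennreal (\<integral>w. X k w \<partial>M)"
      and Xb: "(\<integral>w. X k w \<partial>M) \<le> exp ((a k)\<^sup>2 * B\<^sup>2 / 2)" for k
    proof -
      obtain i j where k: "k = (i, j)" by (cases k)
      show "(\<integral>\<^sup>+w. ennreal (X k w) \<partial>M) = ennreal (\<integral>w. X k w \<partial>M)"
        unfolding X_def k using sg[where i=i and j=j and s="a (i,j)"] by (intro nn_integral_eq_integral) auto
      show "(\<integral>w. X k w \<partial>M) \<le> exp ((a k)\<^sup>2 * B\<^sup>2 / 2)"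
        unfolding X_def k using sg[where i=i and j=j and s="a (i,j)"] by simp
    qed
    have "(\<integral>\<^sup>+w. (\<Prod>i\<in>UNIV. ennreal (exp (c * W i w * g i))) \<partial>M)
        = (\<integral>\<^sup>+w. (\<Prod>k\<in>UNIV. ennreal (X k w)) \<partial>M)"
      by (simp add: prod_ennreal pe X_def)
    also have "\<dots> = (\<Prod>k\<in>UNIV. \<integral>\<^sup>+w. ennreal (X k w) \<partial>M)"
      by (rule M.indep_vars_nn_integral[OF _ indX']) auto
    also have "\<dots> = ennreal (\<Prod>k\<in>UNIV. \<integral>w. X k w \<partial>M)"
    proof -
      have "(\<Prod>k\<in>UNIV. \<integral>\<^sup>+w. ennreal (X k w) \<partial>M) = (\<Prod>k\<in>UNIV. ennreal (\<integral>w. X k w \<partial>M))"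
        by (simp only: Xi)
      also have "\<dots> = ennreal (\<Prod>k\<in>UNIV. \<integral>w. X k w \<partial>M)"
        by (rule prod_ennreal) (simp add: X_def)
      finally show ?thesis .
    qed
    also have "\<dots> \<le> ennreal (\<Prod>k\<in>UNIV. exp ((a k)\<^sup>2 * B\<^sup>2 / 2))"
      by (intro ennreal_leI prod_mono conjI Xb) (auto simp: X_def)
    also have "(\<Prod>k\<in>UNIV. exp ((a k)\<^sup>2 * B\<^sup>2 / 2)) = (\<Prod>i\<in>UNIV. exp (\<sigma> i / 4 * (g i)\<^sup>2))"
    proof -
      have "(\<Prod>k\<in>UNIV. exp ((a k)\<^sup>2 * B\<^sup>2 / 2)) = (\<Prod>k\<in>UNIV \<times> UNIV. exp ((a k)\<^sup>2 * B\<^sup>2 / 2))"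
        by (simp add: UNIV_Times_UNIV)
      also have "\<dots> = (\<Prod>i\<in>UNIV. \<Prod>j\<in>UNIV. exp ((a (i,j))\<^sup>2 * B\<^sup>2 / 2))"
        by (subst prod.cartesian_product) simp
      also have "\<dots> = (\<Prod>i\<in>UNIV. exp (\<sigma> i / 4 * (g i)\<^sup>2))"
      proof (intro prod.cong refl)
        fix i
        have "(\<Sum>j\<in>UNIV. (a (i,j))\<^sup>2 * B\<^sup>2 / 2) = (\<Sum>j\<in>UNIV. (c\<^sup>2 * B\<^sup>2 / 2) * ((g i)\<^sup>2 * \<sigma> i) * (x j)\<^sup>2)"
          unfolding a_def using sig(1)[of i] by (intro sum.cong refl) (simp add: power_mult_distrib mult_ac)
        also have "\<dots> = (c\<^sup>2 * B\<^sup>2 / 2) * ((g i)\<^sup>2 * \<sigma> i) * (\<Sum>j\<in>UNIV. (x j)\<^sup>2)"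
          by (simp add: sum_distrib_left)
        also have "\<dots> = \<sigma> i / 4 * (g i)\<^sup>2" by (simp add: xn c2B)
        finally show "(\<Prod>j\<in>UNIV. exp ((a (i,j))\<^sup>2 * B\<^sup>2 / 2)) = exp (\<sigma> i / 4 * (g i)\<^sup>2)"
          by (simp add: exp_sum[symmetric])
      qed
      finally show ?thesis .
    qed
    finally show ?thesis .
  qed
  have s4: "(\<integral>\<^sup>+g. ennreal (\<Prod>i\<in>UNIV. exp (\<sigma> i / 4 * (g i)\<^sup>2)) \<partial>G) \<le> ennreal (exp ((\<Sum>i\<in>UNIV. \<sigma> i) / 2))"
  proof -
    have "(\<integral>\<^sup>+g. ennreal (\<Prod>i\<in>UNIV. exp (\<sigma> i / 4 * (g i)\<^sup>2)) \<partial>G)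
        = (\<integral>\<^sup>+g. (\<Prod>i\<in>UNIV. ennreal (exp (\<sigma> i / 4 * (g i)\<^sup>2))) \<partial>G)"
      by (simp add: prod_ennreal)
    also have "\<dots> = (\<Prod>i\<in>UNIV. \<integral>\<^sup>+y. ennreal (exp (\<sigma> i / 4 * y\<^sup>2)) \<partial>NG)"
      unfolding G_def by (rule PS.product_nn_integral_prod) auto
    also have "\<dots> = (\<Prod>i\<in>UNIV. ennreal (1 / sqrt (1 - 2 * (\<sigma> i / 4))))"
    proof (intro prod.cong refl gauss_sq)
      fix i
      show "0 \<le> \<sigma> i / 4" using sig(1)[of i] by simp
      show "\<sigma> i / 4 < 1/2" using sig(2)[of i] by simp
    qed
    also have "\<dots> = ennreal (\<Prod>i\<in>UNIV. 1 / sqrt (1 - 2 * (\<sigma> i / 4)))"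
    proof (intro prod_ennreal)
      fix i show "0 \<le> 1 / sqrt (1 - 2 * (\<sigma> i / 4))" using sig(2)[of i] by simp
    qed
    also have "\<dots> \<le> ennreal (\<Prod>i\<in>UNIV. exp (\<sigma> i / 2))"
      using sig sig2 by (intro ennreal_leI prod_mono conjI sqrt_exp_bound) auto
    also have "(\<Prod>i\<in>UNIV. exp (\<sigma> i / 2)) = exp ((\<Sum>i\<in>UNIV. \<sigma> i) / 2)"
      by (simp add: exp_sum sum_divide_distrib)
    finally show ?thesis .
  qed
  have "(\<integral>\<^sup>+w. ennreal (exp ((\<Sum>i\<in>UNIV. (W i w)\<^sup>2) / (4*B\<^sup>2))) \<partial>M)
      = (\<integral>\<^sup>+w. (\<integral>\<^sup>+g. (\<Prod>i\<in>UNIV. ennreal (exp (c * W i w * g i))) \<partial>G) \<partial>M)"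
    by (simp add: s1)
  also have "\<dots> = (\<integral>\<^sup>+g. (\<integral>\<^sup>+w. (\<Prod>i\<in>UNIV. ennreal (exp (c * W i w * g i))) \<partial>M) \<partial>G)"
    using Fubini'[OF s2meas] by simp
  also have "\<dots> \<le> (\<integral>\<^sup>+g. ennreal (\<Prod>i\<in>UNIV. exp (\<sigma> i / 4 * (g i)\<^sup>2)) \<partial>G)"
    by (intro nn_integral_mono s3)
  also have "\<dots> \<le> ennreal (exp ((\<Sum>i\<in>UNIV. \<sigma> i) / 2))" by (rule s4)
  finally show ?thesis unfolding W_def .
qed



lemma net_lemma:
  fixes A :: "real^'m^'d" and C :: "(real^'m) set"
  assumes fin: "finite C" and net: "is_eps_net (sphere 0 1) \<epsilon> C"
    and e: "0 \<le> \<epsilon>" "\<epsilon> < 1" and t: "t \<le> op_norm A"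
  shows "\<exists>x\<in>C. t * (1 - \<epsilon>) \<le> norm (A *v x)"
proof (rule ccontr)
  assume "\<not> ?thesis"
  then have lt: "\<forall>x\<in>C. norm (A *v x) < t * (1 - \<epsilon>)" by auto
  obtain k :: 'm where True by simp
  have "axis k 1 \<in> sphere (0::real^'m) 1" by simp
  with net obtain x0 where "x0 \<in> C" unfolding is_eps_net_def by blast
  then have Cne: "C \<noteq> {}" by auto
  define m where "m = Max ((\<lambda>x. norm (A *v x)) ` C)"
  have mlt: "m < t * (1 - \<epsilon>)" unfolding m_def using fin Cne lt by (subst Max_less_iff) auto
  have mge: "norm (A *v x) \<le> m" if "x \<in> C" for x unfolding m_def using fin that by (intro Max_ge) auto
  have bl: "bounded_linear (\<lambda>x. A *v x)" by simp
  have "op_norm A \<le> m + \<epsilon> * op_norm A" unfolding op_norm_def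
  proof (rule onorm_le)
    fix u :: "real^'m"
    show "norm (A *v u) \<le> (m + \<epsilon> * onorm ((*v) A)) * norm u"
    proof (cases "u = 0")
      case True then show ?thesis by simp
    next
      case False
      define u' where "u' = u /\<^sub>R norm u"
      have "u' \<in> sphere 0 1" unfolding u'_def using False by simp
      with net obtain x where x: "x \<in> C" "dist u' x \<le> \<epsilon>" unfolding is_eps_net_def by blast
      have "norm (A *v u') \<le> norm (A *v x) + norm (A *v (u' - x))"
        by (metis matrix_vector_mult_diff_distrib norm_triangle_ineq2 diff_add_cancel norm_triangle_ineq add.commute)
      also have "norm (A *v (u' - x)) \<le> onorm ((*v) A) * norm (u' - x)"
        using onorm[OF bl] by simp
      also have "\<dots> \<le> onorm ((*v) A) * \<epsilon>"
        using x(2) onorm_pos_le[OF bl] by (intro mult_left_mono) (auto simp: dist_norm)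
      finally have "norm (A *v u') \<le> m + \<epsilon> * onorm ((*v) A)" using mge[OF x(1)] by (simp add: mult.commute)
      moreover have "A *v u = norm u *\<^sub>R (A *v u')"
        unfolding u'_def using False by (simp add: matrix_vector_mult_scaleR)
      ultimately show ?thesis using False by (simp add: mult.commute mult_left_mono)
    qed
  qed
  then have "(1 - \<epsilon>) * op_norm A \<le> m" by (simp add: algebra_simps)
  also have "\<dots> < (1 - \<epsilon>) * t" using mlt by (simp add: mult.commute)
  finally have "op_norm A < t" using e by simp
  with t show False by simp
qed

lemma net_exists:
  assumes "0 < \<epsilon>"
  shows "\<exists>C. finite C \<and> is_eps_net (sphere (0::real^'m) 1) \<epsilon> C"
proof -
  have cpt: "compact (sphere (0::real^'m) 1)" by simp
  have cov: "sphere (0::real^'m) 1 \<subseteq> (\<Union>c\<in>sphere 0 1. ball c \<epsilon>)" using assms by force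
  obtain T where T: "T \<subseteq> sphere (0::real^'m) 1" "finite T" "sphere (0::real^'m) 1 \<subseteq> (\<Union>c\<in>T. ball c \<epsilon>)"
    using compactE_image[OF cpt _ cov] by auto
  have "is_eps_net (sphere 0 1) \<epsilon> T"
    unfolding is_eps_net_def using T by (force simp: dist_commute less_imp_le)
  with T show ?thesis by blast
qed

lemma net_number_ex:
  assumes "0 < \<epsilon>"
  obtains C where "finite C" "card C = net_number (sphere (0::real^'m) 1) \<epsilon>"
    "is_eps_net (sphere (0::real^'m) 1) \<epsilon> C"
proof -
  obtain C0 where "finite C0" "is_eps_net (sphere (0::real^'m) 1) \<epsilon> C0" using net_exists[OF assms] by blast
  then have "\<exists>n C. finite C \<and> card C = n \<and> is_eps_net (sphere (0::real^'m) 1) \<epsilon> C" by blast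
  then have "\<exists>C. finite C \<and> card C = net_number (sphere (0::real^'m) 1) \<epsilon> \<and> is_eps_net (sphere (0::real^'m) 1) \<epsilon> C"
    unfolding net_number_def by (rule LeastI_ex)
  then show ?thesis using that by blast
qed

lemma diag_entry:
  fixes A :: "real^'n^'n"
  shows "axis i 1 \<bullet> (A *v axis i 1) = A $ i $ i"
proof -
  have "(A *v axis i 1) $ i = A $ i $ i"
    by (simp add: matrix_vector_mult_def axis_def if_distrib sum.delta cong: if_cong)
  then show ?thesis by (simp add: inner_axis')
qed

lemma sum_sq_sphere:
  fixes x :: "real^'m"
  assumes "norm x = 1"
  shows "(\<Sum>j\<in>UNIV. (x $ j)\<^sup>2) = 1"
proof -
  have "x \<bullet> x = 1" using assms by (simp add: dot_square_norm)
  then show ?thesis by (simp add: inner_vec_def power2_eq_square)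
qed

lemma norm_formula:
  fixes S :: "real^'d^'d" and Z :: "real^'m^'d" and x :: "real^'m"
  assumes "diagonal_mat S"
  shows "norm ((diag_sqrt S ** Z) *v x) = sqrt (\<Sum>i\<in>UNIV. (sqrt (S$i$i) * (\<Sum>j\<in>UNIV. Z $ i $ j * x $ j))\<^sup>2)"
proof -
  have e: "(diag_sqrt S ** Z) $ i $ j = sqrt (S$i$i) * Z $ i $ j" for i j
  proof -
    have "(diag_sqrt S ** Z) $ i $ j = (\<Sum>k\<in>UNIV. (if i = k then sqrt (S$i$i) else 0) * Z$k$j)"
      by (simp add: matrix_matrix_mult_def diag_sqrt_def)
    also have "\<dots> = (\<Sum>k\<in>UNIV. (if k = i then sqrt (S$i$i) * Z $ i $ j else 0))"
      by (intro sum.cong) auto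
    finally show ?thesis by simp
  qed
  have "((diag_sqrt S ** Z) *v x) $ i = sqrt (S$i$i) * (\<Sum>j\<in>UNIV. Z $ i $ j * x $ j)" for i
    by (simp add: matrix_vector_mult_def e sum_distrib_left mult_ac)
  then show ?thesis by (simp add: norm_vec_def L2_set_def)
qed


theorem mainTheorem13:
  fixes M :: "'w measure"
    and Y :: "'d::finite \<Rightarrow> 'm::finite \<Rightarrow> 'w \<Rightarrow> real"
    and \<Sigma> :: "real^'d^'d"
    and B t \<epsilon> :: real
  assumes "prob_space M"
    and "CARD('m) \<le> CARD('d)"
    and "B > 0"
    and "\<And>i j. Y i j \<in> borel_measurable M"
    and "prob_space.indep_vars M (\<lambda>_. borel) (\<lambda>(i, j). Y i j) UNIV"
    and "\<And>i j. subgaussian M (Y i j) B"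
    and "diagonal_mat \<Sigma>" and "psd_mat \<Sigma>" and "psd_mat (mat 1 - \<Sigma>)"
    and "t \<ge> 0" and "0 < \<epsilon>" and "\<epsilon> < 1"
  shows "measure M {w \<in> space M.
             op_norm (diag_sqrt \<Sigma> ** (\<chi> i j. Y i j w)) \<ge> t}
         \<le> real (net_number (sphere (0::real^'m) 1) \<epsilon>)
            * exp (trace \<Sigma> / 2 - t\<^sup>2 * (1 - \<epsilon>)\<^sup>2 / (4 * B\<^sup>2))"
proof -
  note P = assms(1) and Bpos = assms(3) and meas[measurable] = assms(4) and ind = assms(5)
  interpret M: prob_space M by (rule P)
  have sg: "\<And>i j s. integrable M (\<lambda>w. exp (s * Y i j w)) \<and>
        (\<integral>w. exp (s * Y i j w) \<partial>M) \<le> exp (s\<^sup>2 * B\<^sup>2 / 2)"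
    using assms(6) unfolding subgaussian_def by blast
  define \<sigma> where "\<sigma> i = \<Sigma> $ i $ i" for i
  have sig0: "0 \<le> \<sigma> i" for i
    using assms(8) diag_entry[of i \<Sigma>] unfolding psd_mat_def \<sigma>_def by metis
  have sig1: "\<sigma> i \<le> 1" for i
  proof -
    have "0 \<le> (mat 1 - \<Sigma>) $ i $ i"
      using assms(9) diag_entry[of i "mat 1 - \<Sigma>"] unfolding psd_mat_def by metis
    then show ?thesis unfolding \<sigma>_def by (simp add: mat_def)
  qed
  have tr: "trace \<Sigma> = (\<Sum>i\<in>UNIV. \<sigma> i)" by (simp add: trace_def \<sigma>_def)
  define s where "s = t * (1 - \<epsilon>)"
  have s0: "0 \<le> s" unfolding s_def using assms(10,12) by simp
  obtain C where C: "finite C" "card C = net_number (sphere (0::real^'m) 1) \<epsilon>"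
    "is_eps_net (sphere (0::real^'m) 1) \<epsilon> C"
    using net_number_ex[OF assms(11)] by blast
  define Q where "Q x w = (\<Sum>i\<in>UNIV. (sqrt (\<sigma> i) * (\<Sum>j\<in>UNIV. Y i j w * x $ j))\<^sup>2)" for x :: "real^'m" and w
  define E where "E x = {w\<in>space M. s \<le> sqrt (Q x w)}" for x
  have Qm[measurable]: "Q x \<in> borel_measurable M" for x unfolding Q_def by measurable
  have Em: "E x \<in> sets M" for x unfolding E_def by measurable
  have Q0: "0 \<le> Q x w" for x w unfolding Q_def by (intro sum_nonneg) simp
  define bnd where "bnd = exp (trace \<Sigma> / 2 - t\<^sup>2 * (1 - \<epsilon>)\<^sup>2 / (4 * B\<^sup>2))"
  have incl: "{w \<in> space M. op_norm (diag_sqrt \<Sigma> ** (\<chi> i j. Y i j w)) \<ge> t} \<subseteq> (\<Union>x\<in>C. E x)"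
  proof
    fix w assume w: "w \<in> {w \<in> space M. op_norm (diag_sqrt \<Sigma> ** (\<chi> i j. Y i j w)) \<ge> t}"
    then obtain x where x: "x \<in> C" "s \<le> norm ((diag_sqrt \<Sigma> ** (\<chi> i j. Y i j w)) *v x)"
      using net_lemma[OF C(1) C(3), where A="diag_sqrt \<Sigma> ** (\<chi> i j. Y i j w)" and t=t] assms(11,12)
      unfolding s_def by auto
    have "norm ((diag_sqrt \<Sigma> ** (\<chi> i j. Y i j w)) *v x) = sqrt (Q x w)"
      unfolding norm_formula[OF assms(7)] Q_def \<sigma>_def by simp
    with x w show "w \<in> (\<Union>x\<in>C. E x)" unfolding E_def by auto
  qed
  have Eb: "measure M (E x) \<le> bnd" if "x \<in> C" for x
  proof -
    have "x \<in> sphere 0 1" using C(3) that unfolding is_eps_net_def by blast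
    then have xn: "(\<Sum>j\<in>UNIV. (x $ j)\<^sup>2) = 1" by (intro sum_sq_sphere) simp
    have core': "(\<integral>\<^sup>+w. ennreal (exp (Q x w / (4*B\<^sup>2))) \<partial>M) \<le> ennreal (exp ((\<Sum>i\<in>UNIV. \<sigma> i) / 2))"
      unfolding Q_def
      by (rule core[OF P Bpos meas ind sg sig0 sig1, of "\<lambda>j. x $ j"]) (use xn in simp)
    have "emeasure M (E x) = (\<integral>\<^sup>+w. indicator (E x) w \<partial>M)"
      by (simp add: Em)
    also have "\<dots> \<le> (\<integral>\<^sup>+w. ennreal (exp (- s\<^sup>2 / (4*B\<^sup>2))) * ennreal (exp (Q x w / (4*B\<^sup>2))) \<partial>M)"
    proof (intro nn_integral_mono)
      fix w
      show "indicator (E x) w \<le> ennreal (exp (- s\<^sup>2 / (4*B\<^sup>2))) * ennreal (exp (Q x w / (4*B\<^sup>2)))"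
      proof (cases "w \<in> E x")
        case True
        then have "s \<le> sqrt (Q x w)" unfolding E_def by auto
        then have "s\<^sup>2 \<le> Q x w" using s0 Q0[of x w]
          by (metis real_sqrt_le_iff real_sqrt_pow2 power_mono)
        then have "- s\<^sup>2 / (4*B\<^sup>2) + Q x w / (4*B\<^sup>2) \<ge> 0" using Bpos
          by (simp add: divide_right_mono flip: add_divide_distrib)
        then have "1 \<le> exp (- s\<^sup>2 / (4*B\<^sup>2)) * exp (Q x w / (4*B\<^sup>2))"
          by (simp add: exp_add[symmetric])
        then show ?thesis using True by (simp add: ennreal_mult'[symmetric])
      qed simp
    qed
    also have "\<dots> = ennreal (exp (- s\<^sup>2 / (4*B\<^sup>2))) * (\<integral>\<^sup>+w. ennreal (exp (Q x w / (4*B\<^sup>2))) \<partial>M)"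
      by (rule nn_integral_cmult) measurable
    also have "\<dots> \<le> ennreal (exp (- s\<^sup>2 / (4*B\<^sup>2))) * ennreal (exp ((\<Sum>i\<in>UNIV. \<sigma> i) / 2))"
      by (rule mult_left_mono[OF core']) simp
    also have "\<dots> = ennreal bnd"
      unfolding bnd_def tr s_def
      by (simp add: ennreal_mult'[symmetric] exp_add[symmetric] power_mult_distrib)
    finally have "emeasure M (E x) \<le> ennreal bnd" .
    then show ?thesis using M.emeasure_eq_measure[of "E x"] bnd_def
      by (simp add: ennreal_le_iff)
  qed
  have "measure M {w \<in> space M. op_norm (diag_sqrt \<Sigma> ** (\<chi> i j. Y i j w)) \<ge> t} \<le> measure M (\<Union>x\<in>C. E x)"
    by (rule M.finite_measure_mono[OF incl]) (use C(1) Em in auto)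
  also have "\<dots> \<le> (\<Sum>x\<in>C. measure M (E x))"
    by (rule measure_UNION_le) (use C(1) Em in auto)
  also have "\<dots> \<le> (\<Sum>x\<in>C. bnd)" by (rule sum_mono) (rule Eb)
  also have "\<dots> = real (net_number (sphere (0::real^'m) 1) \<epsilon>) * bnd" using C(2) by simp
  finally show ?thesis unfolding bnd_def .
qed

end
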